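(* Let $k\in\mathbb{N}$, $n>2k$, $q>k$ and $\lambda_0>0$. Assume there exists a classical solution $w$ of \[ c_{n,k}r^{1-n}\big(r^{n-k}(w')^k\big)'=\lambda_0(1-w)^q\ (0<r<1),\quad w<0\ (0<r<1),\quad w'(0)=0,\ w(1)=0. \] Then for every $\lambda\in(0,\lambda_0)$ problem $(P_\lambda)$ has a maximal bounded solution $u_\lambda$. Moreover, the maximal solutions are decreasing in $\lambda$: if $0<\lambda_1<\lambda_2<\lambda_0$, then $u_{\lambda_2}\le u_{\lambda_1}$.
   Context: $c_{n,k}=\binom{n}{k}/n$. Problem $(P_\lambda)$ ($\lambda>0$) is $c_{n,k}r^{1-n}(r^{n-k}(u')^k)'=\lambda(1-u)^q$ on $(0,1)$, $u<0$ on $(0,1)$, $u'(0)=0$, $u(1)=0$. A classical solution is a function in $\Phi_0^k=\{u\in C^2((0,1))\cap C^1([0,1]): (r^{n-i}(u')^i)'\ge0 \text{ on }(0,1),\ i=1,\dots,k,\ u'(0)=u(1)=0\}$ satisfying the equation. A subsolution is $u\in C^2((0,1))\cap C^1([0,1])$ with $(r^{n-i}(u')^i)'\ge0$ for $i=1,\dots,k$, $c_{n,k}r^{1-n}(r^{n-k}(u')^k)'\ge\lambda(1-u)^q$ and $u(1)\le0$. A maximal solution is a solution $v$ with $u\le v$ for every subsolution $u$. *)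

theory Defs
  imports "HOL-Analysis.Analysis"
begin

definition cnk :: "nat \<Rightarrow> nat \<Rightarrow> real" where
  "cnk n k = real (n choose k) / real n"

text \<open>u in C^2((0,1)) \<inter> C^1([0,1]) with derivative u' (on [0,1], one-sided at the endpoints).\<close>
definition C2C1 :: "(real \<Rightarrow> real) \<Rightarrow> (real \<Rightarrow> real) \<Rightarrow> bool" where
  "C2C1 u u' \<longleftrightarrow>
     (\<forall>x\<in>{0..1}. (u has_real_derivative u' x) (at x within {0..1})) \<and>
     continuous_on {0..1} u' \<and>
     (\<forall>x\<in>{0<..<1}. u' differentiable (at x)) \<and>
     continuous_on {0<..<1} (deriv u')"

definition k_admissible :: "nat \<Rightarrow> nat \<Rightarrow> (real \<Rightarrow> real) \<Rightarrow> (real \<Rightarrow> real) \<Rightarrow> bool" where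
  "k_admissible n k u u' \<longleftrightarrow> C2C1 u u' \<and>
     (\<forall>i\<in>{1..k}. \<forall>r\<in>{0<..<1}. deriv (\<lambda>s. s ^ (n - i) * (u' s) ^ i) r \<ge> 0)"

definition hess_op :: "nat \<Rightarrow> nat \<Rightarrow> (real \<Rightarrow> real) \<Rightarrow> real \<Rightarrow> real" where
  "hess_op n k u' r = cnk n k * r powr (1 - real n) * deriv (\<lambda>s. s ^ (n - k) * (u' s) ^ k) r"

definition classical_solution :: "nat \<Rightarrow> nat \<Rightarrow> real \<Rightarrow> real \<Rightarrow> (real \<Rightarrow> real) \<Rightarrow> bool" where
  "classical_solution n k q lam u \<longleftrightarrow> (\<exists>u'. k_admissible n k u u' \<and> u' 0 = 0 \<and> u 1 = 0 \<and>
     (\<forall>r\<in>{0<..<1}. u r < 0 \<and> hess_op n k u' r = lam * (1 - u r) powr q))"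

definition subsolution :: "nat \<Rightarrow> nat \<Rightarrow> real \<Rightarrow> real \<Rightarrow> (real \<Rightarrow> real) \<Rightarrow> bool" where
  "subsolution n k q lam u \<longleftrightarrow> (\<exists>u'. k_admissible n k u u' \<and> u 1 \<le> 0 \<and>
     (\<forall>r\<in>{0<..<1}. hess_op n k u' r \<ge> lam * (1 - u r) powr q))"

definition maximal_solution :: "nat \<Rightarrow> nat \<Rightarrow> real \<Rightarrow> real \<Rightarrow> (real \<Rightarrow> real) \<Rightarrow> bool" where
  "maximal_solution n k q lam v \<longleftrightarrow> classical_solution n k q lam v \<and>
     (\<forall>u. subsolution n k q lam u \<longrightarrow> (\<forall>r\<in>{0..1}. u r \<le> v r))"

end

theory Submission imports Defs begin


definition hh :: "nat \<Rightarrow> nat \<Rightarrow> real \<Rightarrow> real \<Rightarrow> (real\<Rightarrow>real) \<Rightarrow> real \<Rightarrow> real" where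
  "hh n k q lam u s = s^(n-1) * lam * (1 - u s) powr q / cnk n k"
definition FF :: "nat \<Rightarrow> nat \<Rightarrow> real \<Rightarrow> real \<Rightarrow> (real\<Rightarrow>real) \<Rightarrow> real \<Rightarrow> real" where
  "FF n k q lam u r = integral {0..r} (hh n k q lam u)"
definition gg :: "nat \<Rightarrow> nat \<Rightarrow> real \<Rightarrow> real \<Rightarrow> (real\<Rightarrow>real) \<Rightarrow> real \<Rightarrow> real" where
  "gg n k q lam u r = (if r \<le> 0 then 0 else (r powr (real k - real n) * FF n k q lam u r) powr (1/real k))"
definition TT :: "nat \<Rightarrow> nat \<Rightarrow> real \<Rightarrow> real \<Rightarrow> (real\<Rightarrow>real) \<Rightarrow> real \<Rightarrow> real" where
  "TT n k q lam u r = integral {0..r} (gg n k q lam u) - integral {0..1} (gg n k q lam u)"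

locale S =
  fixes n k :: nat and q lam :: real
  assumes k1: "k \<ge> 1" and nk: "n > 2*k" and qk: "q > real k" and lam: "lam > 0"
begin

abbreviation "c \<equiv> cnk n k"
abbreviation "h \<equiv> hh n k q lam"
abbreviation "F \<equiv> FF n k q lam"
abbreviation "g \<equiv> gg n k q lam"
abbreviation "T \<equiv> TT n k q lam"

lemma c_pos: "c > 0"
  using nk by (simp add: cnk_def)

lemma q_pos: "q > 0" using qk k1 by simp

definition nice :: "(real \<Rightarrow> real) \<Rightarrow> real \<Rightarrow> bool" where
  "nice u B \<longleftrightarrow> (\<forall>s\<in>{0..1}. -B \<le> u s \<and> u s \<le> 0) \<and> h u integrable_on {0..1}"

lemma h_lower: assumes "s \<ge> 0" "u s \<le> 0" shows "s^(n-1) * (lam / c) \<le> h u s"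
proof -
  have "1 \<le> (1 - u s) powr q" using assms q_pos by (simp add: ge_one_powr_ge_zero)
  hence "s^(n-1) * lam * 1 \<le> s^(n-1) * lam * (1 - u s) powr q"
    using assms lam by (intro mult_left_mono) auto
  thus ?thesis using c_pos by (simp add: hh_def divide_right_mono)
qed

lemma h_upper: assumes "s \<ge> 0" "u s \<le> 0" "-B \<le> u s"
  shows "h u s \<le> s^(n-1) * (lam * (1 + B) powr q / c)"
proof -
  have "(1 - u s) powr q \<le> (1 + B) powr q" using assms q_pos by (intro powr_mono2) auto
  hence "s^(n-1) * lam * (1 - u s) powr q \<le> s^(n-1) * lam * (1+B) powr q"
    using assms lam by (intro mult_left_mono) auto
  thus ?thesis using c_pos by (simp add: hh_def divide_right_mono)
qed

lemma h_nonneg: "h u s \<ge> 0" if "s \<ge> 0"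
  using that lam c_pos by (simp add: hh_def)

lemma pow_integral: assumes "r \<ge> 0"
  shows "((\<lambda>s. s^(n-1)) has_integral r^n / n) {0..r}"
proof -
  have n0: "n \<ge> 1" using nk by simp
  have "((\<lambda>s. s^(n-1)) has_integral (r^n/n - 0^n/n)) {0..r}"
  proof (rule fundamental_theorem_of_calculus)
    show "0 \<le> r" by fact
    fix x assume "x \<in> {0..r}"
    have "((\<lambda>s. s^n / n) has_real_derivative (real n * x^(n-1)) / n) (at x within {0..r})"
      using n0 by (intro derivative_eq_intros) auto
    moreover have "(real n * x^(n-1)) / n = x^(n-1)" using n0 by simp
    ultimately show "((\<lambda>s. s^n / n) has_vector_derivative x^(n-1)) (at x within {0..r})"
      by (simp add: has_real_derivative_iff_has_vector_derivative)
  qed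
  moreover have "(0::real)^n = 0" using n0 by simp
  ultimately show ?thesis by simp
qed

lemma rpow_aux: assumes "r > 0" shows "r powr (real k - real n) * r^n = r^k"
proof -
  have "r powr (real k - real n) * r^n = r powr (real k - real n) * r powr (real n)"
    using assms by (simp add: powr_realpow)
  also have "\<dots> = r powr (real k)" using assms by (simp add: powr_add[symmetric])
  also have "\<dots> = r^k" using assms by (simp add: powr_realpow)
  finally show ?thesis .
qed

lemma root_aux: assumes "r > 0" "a \<ge> 0" shows "(a * r^k) powr (1/real k) = a powr (1/real k) * r"
proof -
  have "(r^k) powr (1/real k) = (r powr real k) powr (1/real k)" using assms by (simp add: powr_realpow)
  also have "\<dots> = r" using assms k1 by (simp add: powr_powr)
  finally show ?thesis using assms by (simp add: powr_mult)
qed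

lemma nice_int: assumes "nice u B" "0 \<le> r" "r \<le> 1" shows "h u integrable_on {0..r}"
  using assms unfolding nice_def by (auto intro: integrable_subinterval_real)

lemma F_lower: assumes "nice u B" "0 \<le> r" "r \<le> 1" shows "(lam/c) / n * r^n \<le> F u r"
proof -
  have "((\<lambda>s. s^(n-1) * (lam/c)) has_integral (r^n/n) * (lam/c)) {0..r}"
    using pow_integral[OF assms(2)] by (rule has_integral_mult_left)
  hence "integral {0..r} (\<lambda>s. s^(n-1) * (lam/c)) = (r^n/n) * (lam/c)" by (rule integral_unique)
  hence "(r^n/n) * (lam/c) = integral {0..r} (\<lambda>s. s^(n-1) * (lam/c))" by simp
  also have "\<dots> \<le> integral {0..r} (h u)"
    apply (rule integral_le)
    using \<open>((\<lambda>s. s^(n-1) * (lam/c)) has_integral _) _\<close> apply blast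
    using nice_int[OF assms] apply blast
    using assms by (intro h_lower) (auto simp: nice_def)
  finally show ?thesis by (simp add: FF_def mult_ac)
qed

lemma F_upper: assumes "nice u B" "0 \<le> r" "r \<le> 1" shows "F u r \<le> (lam * (1 + B) powr q / c) / n * r^n"
proof -
  have "((\<lambda>s. s^(n-1) * (lam * (1 + B) powr q / c)) has_integral (r^n/n) * (lam * (1 + B) powr q / c)) {0..r}"
    using pow_integral[OF assms(2)] by (rule has_integral_mult_left)
  hence "integral {0..r} (\<lambda>s. s^(n-1) * (lam * (1 + B) powr q / c)) = (r^n/n) * (lam * (1 + B) powr q / c)" by (rule integral_unique)
  hence eq: "(r^n/n) * (lam * (1 + B) powr q / c) = integral {0..r} (\<lambda>s. s^(n-1) * (lam * (1 + B) powr q / c))" by simp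
  have "integral {0..r} (h u) \<le> integral {0..r} (\<lambda>s. s^(n-1) * (lam * (1 + B) powr q / c))"
    apply (rule integral_le)
    using nice_int[OF assms] apply blast
    using \<open>((\<lambda>s. s^(n-1) * _) has_integral _) _\<close> apply blast
    using assms by (intro h_upper) (auto simp: nice_def)
  thus ?thesis using eq by (simp add: FF_def mult_ac)
qed

lemma F_nonneg: assumes "nice u B" "0 \<le> r" "r \<le> 1" shows "F u r \<ge> 0"
proof -
  have "(lam/c)/n*r^n \<ge> 0" using lam c_pos assms by simp
  thus ?thesis using F_lower[OF assms] by linarith
qed

lemma F_pos: assumes "nice u B" "0 < r" "r \<le> 1" shows "F u r > 0"
proof -
  have "(lam/c) / n * r^n > 0" using lam c_pos assms nk by simp
  thus ?thesis using F_lower[of u B r] assms by simp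
qed

definition "gm = ((lam/c) / n) powr (1/real k)"
definition "gM B = ((lam * (1 + B) powr q / c) / n) powr (1/real k)"

lemma g_bounds: assumes "nice u B" "0 < r" "r \<le> 1" shows "gm * r \<le> g u r" "g u r \<le> gM B * r"
proof -
  define A where "A = r powr (real k - real n) * F u r"
  have gA: "g u r = A powr (1/real k)" using assms by (simp add: gg_def A_def)
  have pp: "r powr (real k - real n) > 0" using assms by simp
  have "-B \<le> u 0 \<and> u 0 \<le> 0" using assms(1) by (simp add: nice_def)
  hence B0: "B \<ge> 0" by linarith
  have "(lam/c) / n * r^k = r powr (real k - real n) * ((lam/c) / n * r^n)"
    using rpow_aux[OF assms(2)] by (simp add: algebra_simps)
  also have "\<dots> \<le> A" unfolding A_def using pp F_lower[OF assms(1) _ assms(3)] assms(2)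
    by (intro mult_left_mono) auto
  finally have A1: "(lam/c) / n * r^k \<le> A" .
  have "A \<le> r powr (real k - real n) * ((lam * (1 + B) powr q / c) / n * r^n)"
    unfolding A_def using pp F_upper[OF assms(1) _ assms(3)] assms(2)
    by (intro mult_left_mono) auto
  also have "\<dots> = (lam * (1 + B) powr q / c) / n * r^k"
    using rpow_aux[OF assms(2)] by (simp add: algebra_simps)
  finally have A2: "A \<le> (lam * (1 + B) powr q / c) / n * r^k" .
  have l0: "0 \<le> (lam/c) / n * r^k" using lam c_pos assms by simp
  have "gm * r = ((lam/c) / n * r^k) powr (1/real k)"
    unfolding gm_def by (rule root_aux[OF assms(2), symmetric]) (use lam c_pos in simp)
  also have "\<dots> \<le> g u r" unfolding gA using A1 l0 k1 by (intro powr_mono2) auto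
  finally show "gm * r \<le> g u r" .
  have "g u r \<le> ((lam * (1 + B) powr q / c) / n * r^k) powr (1/real k)"
    unfolding gA using A2 l0 A1 k1 by (intro powr_mono2) auto
  also have "\<dots> = gM B * r" unfolding gM_def by (rule root_aux[OF assms(2)]) (use lam c_pos B0 in simp)
  finally show "g u r \<le> gM B * r" .
qed

lemma gm_pos: "gm > 0" unfolding gm_def using lam c_pos nk by simp

lemma F_cont: assumes "nice u B" shows "continuous_on {0..1} (F u)"
proof -
  have "h u integrable_on {0..1}" using assms by (simp add: nice_def)
  from indefinite_integral_continuous_1[OF this] show ?thesis
    by (simp add: FF_def[abs_def])
qed

lemma g_nonneg: assumes "nice u B" "0 \<le> r" "r \<le> 1" shows "g u r \<ge> 0"
  using assms by (simp add: gg_def)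

lemma g_zero: "g u 0 = 0" by (simp add: gg_def)

lemma g_cont: assumes "nice u B" shows "continuous_on {0..1} (g u)"
proof -
  have c1: "continuous_on {0<..1} (g u)"
  proof -
    have "continuous_on {0<..1} (\<lambda>r. (r powr (real k - real n) * F u r) powr (1/real k))"
    proof (intro continuous_intros)
      show "continuous_on {0<..1} (F u)"
        using F_cont[OF assms] by (rule continuous_on_subset) auto
      show "\<forall>x\<in>{0<..1::real}. x \<noteq> 0" by auto
      show "\<forall>x\<in>{0<..1}. x powr (real k - real n) * F u x \<noteq> 0"
      proof
        fix x :: real assume "x \<in> {0<..1}"
        hence "F u x > 0" "x > 0" using F_pos[OF assms] by auto
        thus "x powr (real k - real n) * F u x \<noteq> 0" by simp
      qed
    qed
    thus ?thesis by (rule continuous_on_eq) (auto simp: gg_def)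
  qed
  show ?thesis
    unfolding continuous_on_eq_continuous_within
  proof
    fix x :: real assume x: "x \<in> {0..1}"
    show "continuous (at x within {0..1}) (g u)"
    proof (cases "x = 0")
      case True
      have ev: "\<forall>\<^sub>F r in at 0 within {0..1}. r \<in> {0..1}"
        by (simp add: eventually_at_filter)
      have "(g u \<longlongrightarrow> 0) (at 0 within {0..1})"
      proof (rule tendsto_sandwich[where f="\<lambda>_. 0" and h="\<lambda>r. gM B * r"])
        show "\<forall>\<^sub>F r in at 0 within {0..1}. 0 \<le> g u r"
          using ev by eventually_elim (use g_nonneg[OF assms] in auto)
        show "\<forall>\<^sub>F r in at 0 within {0..1}. g u r \<le> gM B * r"
          using ev
        proof eventually_elim
          case (elim r)
          show ?case
          proof (cases "r = 0")
            case True thus ?thesis by (simp add: g_zero)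
          next
            case False thus ?thesis using g_bounds(2)[OF assms, of r] elim by auto
          qed
        qed
        show "((\<lambda>_. 0) \<longlongrightarrow> 0) (at 0 within {0..1})" by simp
        have "((\<lambda>r. gM B * r) \<longlongrightarrow> gM B * 0) (at 0 within {0..1})"
          by (intro tendsto_intros)
        thus "((\<lambda>r. gM B * r) \<longlongrightarrow> 0) (at 0 within {0..1})" by simp
      qed
      thus ?thesis using True by (simp add: continuous_within g_zero)
    next
      case False
      hence x0: "x \<in> {0<..1}" using x by auto
      have "continuous (at x within {0<..1}) (g u)"
        using c1 x0 by (simp add: continuous_on_eq_continuous_within)
      moreover have "at x within {0..1} = at x within {0<..1}"
        by (rule at_within_nhd[where S="{0<..<2}"]) (use x0 in auto)
      ultimately show ?thesis by (simp add: continuous_within)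
    qed
  qed
qed

lemma g_int: assumes "nice u B" "0 \<le> a" "b \<le> 1" shows "g u integrable_on {a..b}"
  using g_cont[OF assms(1)] assms by (intro integrable_continuous_interval) (auto intro: continuous_on_subset)

lemma T_alt: assumes "nice u B" "0 \<le> r" "r \<le> 1" shows "T u r = - integral {r..1} (g u)"
proof -
  have "integral {0..r} (g u) + integral {r..1} (g u) = integral {0..1} (g u)"
    by (rule Henstock_Kurzweil_Integration.integral_combine) (use assms g_int[OF assms(1), of 0 1] in auto)
  thus ?thesis by (simp add: TT_def)
qed

lemma T_deriv: assumes "nice u B" "x \<in> {0..1}"
  shows "(T u has_real_derivative g u x) (at x within {0..1})"
proof -
  have "((\<lambda>r. integral {0..r} (g u)) has_real_derivative g u x) (at x within {0..1})"
    by (rule integral_has_real_derivative[OF g_cont[OF assms(1)] assms(2)])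
  hence "((\<lambda>r. integral {0..r} (g u) - integral {0..1} (g u)) has_real_derivative g u x - 0) (at x within {0..1})"
    by (intro derivative_intros)
  thus ?thesis by (simp add: TT_def[abs_def])
qed

lemma T_one: "T u 1 = 0" by (simp add: TT_def)

lemma T_upper: assumes "nice u B" "0 \<le> r" "r \<le> 1" shows "T u r \<le> - (gm * ((1 - r^2)/2))"
proof -
  have hi: "((\<lambda>s. gm * s) has_integral gm * ((1 - r^2)/2)) {r..1}"
  proof -
    have "((\<lambda>s. s) has_integral (1^2/2 - r^2/2)) {r..1}"
    proof (rule fundamental_theorem_of_calculus)
      show "r \<le> 1" by fact
      fix x assume "x \<in> {r..1}"
      have "((\<lambda>s. s^2/2) has_real_derivative (2 * x^1)/2) (at x within {r..1})"
        by (intro derivative_eq_intros) auto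
      thus "((\<lambda>s. s^2/2) has_vector_derivative x) (at x within {r..1})"
        by (simp add: has_real_derivative_iff_has_vector_derivative)
    qed
    from has_integral_mult_right[OF this, of gm] show ?thesis by (simp add: diff_divide_distrib mult_ac)
  qed
  have "gm * ((1 - r^2)/2) = integral {r..1} (\<lambda>s. gm * s)" using integral_unique[OF hi] by (rule sym)
  also have "\<dots> \<le> integral {r..1} (g u)"
  proof (rule integral_le)
    show "(\<lambda>s. gm * s) integrable_on {r..1}" using hi by blast
    show "g u integrable_on {r..1}" using g_int[OF assms(1)] assms by simp
    fix s assume s: "s \<in> {r..1}"
    show "gm * s \<le> g u s"
    proof (cases "s = 0")
      case True thus ?thesis by (simp add: g_zero)
    next
      case False thus ?thesis using g_bounds(1)[OF assms(1), of s] s assms by auto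
    qed
  qed
  finally show ?thesis using T_alt[OF assms] by simp
qed

lemma T_nonpos: assumes "nice u B" "0 \<le> r" "r \<le> 1" shows "T u r \<le> 0"
proof -
  have "gm * ((1 - r^2)/2) \<ge> 0" using gm_pos assms by (simp add: power_le_one)
  thus ?thesis using T_upper[OF assms] by linarith
qed

lemma T_neg: assumes "nice u B" "0 < r" "r < 1" shows "T u r < 0"
proof -
  have "r^2 < 1" using assms by (simp add: power_less_one_iff)
  hence "gm * ((1 - r^2)/2) > 0" using gm_pos by simp
  moreover have "T u r \<le> - (gm * ((1 - r^2)/2))" using T_upper[OF assms(1)] assms by auto
  ultimately show ?thesis by linarith
qed

lemma T_cont: assumes "nice u B" shows "continuous_on {0..1} (T u)"
  using T_deriv[OF assms] by (meson DERIV_continuous continuous_on_eq_continuous_within)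

lemma T_mono: assumes "nice u1 B1" "nice u2 B2" "\<And>s. s \<in> {0..1} \<Longrightarrow> u1 s \<le> u2 s"
  and r: "0 \<le> r" "r \<le> 1"
  shows "T u1 r \<le> T u2 r"
proof -
  have hle: "h u2 s \<le> h u1 s" if "s \<in> {0..1}" for s
  proof -
    have "u2 s \<le> 0" using assms(2) that by (simp add: nice_def)
    hence "(1 - u2 s) powr q \<le> (1 - u1 s) powr q" using assms(3)[OF that] q_pos by (intro powr_mono2) auto
    hence "s^(n-1) * lam * (1 - u2 s) powr q \<le> s^(n-1) * lam * (1 - u1 s) powr q"
      using that lam by (intro mult_left_mono) auto
    thus ?thesis using c_pos by (simp add: hh_def divide_right_mono)
  qed
  have Fle: "F u2 t \<le> F u1 t" if "0 \<le> t" "t \<le> 1" for t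
    unfolding FF_def using that
    by (intro integral_le nice_int[OF assms(1)] nice_int[OF assms(2)] hle) auto
  have gle: "g u2 t \<le> g u1 t" if "t \<in> {r..1}" for t
  proof (cases "t = 0")
    case True thus ?thesis by (simp add: g_zero)
  next
    case False
    hence t: "0 < t" "t \<le> 1" using that r by auto
    have "t powr (real k - real n) * F u2 t \<le> t powr (real k - real n) * F u1 t"
      using Fle[of t] t by (intro mult_left_mono) auto
    moreover have "0 \<le> t powr (real k - real n) * F u2 t" using F_nonneg[OF assms(2), of t] t by simp
    ultimately show ?thesis using t k1 by (simp add: gg_def powr_mono2)
  qed
  have "integral {r..1} (g u2) \<le> integral {r..1} (g u1)"
    using r by (intro integral_le g_int[OF assms(1)] g_int[OF assms(2)] gle) auto
  thus ?thesis using T_alt[OF assms(1) r] T_alt[OF assms(2) r] by simp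
qed

definition "Aa u x = x powr (real k - real n) * F u x"
definition "Ad u x = (real k - real n) * x powr (real k - real n - 1) * F u x + x powr (real k - real n) * h u x"
definition "Dg u x = (1/real k) * Aa u x powr (1/real k - 1) * Ad u x"

lemma h_cont: assumes "nice u B" "continuous_on {0..1} u" shows "continuous_on {0..1} (h u)"
proof -
  have "continuous_on {0..1} (\<lambda>s. s^(n-1) * lam * (1 - u s) powr q / c)"
  proof (intro continuous_intros assms(2))
    show "\<forall>x\<in>{0..1}. 1 - u x \<noteq> 0" using assms(1) by (force simp: nice_def)
  qed (use c_pos in auto)
  thus ?thesis by (simp add: hh_def[abs_def])
qed

lemma F_deriv: assumes "nice u B" "continuous_on {0..1} u" "x \<in> {0<..<1}"
  shows "(F u has_real_derivative h u x) (at x)"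
proof -
  have "((\<lambda>r. integral {0..r} (h u)) has_real_derivative h u x) (at x within {0..1})"
    using assms by (intro integral_has_real_derivative h_cont) auto
  moreover have "at x within {0..1} = at x" using assms(3) by (intro at_within_interior) simp
  ultimately show ?thesis by (simp add: FF_def[abs_def])
qed

lemma Aa_pos: assumes "nice u B" "0 < x" "x \<le> 1" shows "Aa u x > 0"
  using F_pos[OF assms] assms by (simp add: Aa_def)

lemma Aa_deriv: assumes "nice u B" "continuous_on {0..1} u" "x \<in> {0<..<1}"
  shows "(Aa u has_real_derivative Ad u x) (at x)"
proof -
  have x: "x > 0" using assms by simp
  have "((\<lambda>x. x powr (real k - real n) * F u x) has_real_derivative
        ((real k - real n) * x powr (real k - real n - 1)) * F u x + x powr (real k - real n) * h u x) (at x)"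
    using DERIV_mult[OF has_real_derivative_powr[OF x, of "real k - real n"] F_deriv[OF assms]] by (simp add: mult.commute)
  thus ?thesis by (simp add: Aa_def[abs_def] Ad_def)
qed

lemma g_deriv: assumes "nice u B" "continuous_on {0..1} u" "x \<in> {0<..<1}"
  shows "(g u has_real_derivative Dg u x) (at x)"
proof -
  have x: "x > 0" "x \<le> 1" using assms by auto
  have "((\<lambda>x. Aa u x powr (1/real k)) has_real_derivative (1/real k) * Aa u x powr (1/real k - of_nat 1) * Ad u x) (at x)"
    by (rule DERIV_fun_powr[OF Aa_deriv[OF assms] Aa_pos[OF assms(1) x]])
  hence "((\<lambda>x. Aa u x powr (1/real k)) has_real_derivative Dg u x) (at x)" by (simp add: Dg_def)
  thus ?thesis
    by (rule has_field_derivative_transform_within_open[where S="{0<..}"]) (use x in \<open>auto simp: gg_def Aa_def\<close>)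
qed

lemma Dg_cont: assumes "nice u B" "continuous_on {0..1} u" shows "continuous_on {0<..<1} (Dg u)"
proof -
  have cF: "continuous_on {0<..<1} (F u)" using F_cont[OF assms(1)] by (rule continuous_on_subset) auto
  have ch: "continuous_on {0<..<1} (h u)" using h_cont[OF assms] by (rule continuous_on_subset) auto
  have pos: "\<forall>x\<in>{0<..<1}. Aa u x \<noteq> 0" using Aa_pos[OF assms(1)] by force
  have cA: "continuous_on {0<..<1} (Aa u)" unfolding Aa_def[abs_def]
    by (intro continuous_intros cF) auto
  show ?thesis unfolding Dg_def[abs_def] Ad_def[abs_def]
    by (intro continuous_intros cF ch cA pos) auto
qed

lemma P_eq: assumes "nice u B" "0 < s" "s \<le> 1" "i \<le> k"
  shows "s^(n-i) * (g u s)^i = s powr (real n - real n * real i / real k) * F u s powr (real i / real k)"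
proof -
  have A: "Aa u s > 0" using Aa_pos[OF assms(1-3)] .
  have Fp: "F u s > 0" using F_pos[OF assms(1-3)] .
  have "(g u s)^i = (Aa u s powr (1/real k))^i" using assms by (simp add: gg_def Aa_def)
  also have "\<dots> = Aa u s powr (real i * (1/real k))" using A by (simp add: powr_power)
  also have "\<dots> = (s powr (real k - real n)) powr (real i / real k) * F u s powr (real i / real k)"
    unfolding Aa_def using Fp assms by (simp add: powr_mult)
  also have "\<dots> = s powr ((real k - real n) * (real i / real k)) * F u s powr (real i / real k)"
    by (simp add: powr_powr)
  finally have 1: "(g u s)^i = s powr ((real k - real n) * (real i / real k)) * F u s powr (real i / real k)" .
  have "i < n" using assms nk by simp
  have "s^(n-i) = s powr (real (n-i))" using assms by (simp add: powr_realpow)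
  hence 2: "s^(n-i) = s powr (real n - real i)" using \<open>i < n\<close> by (simp add: of_nat_diff)
  have 3: "(real n - real i) + (real k - real n) * (real i / real k) = real n - real n * real i / real k"
    using k1 by (simp add: field_simps)
  have "s^(n-i) * (g u s)^i = s powr ((real n - real i) + (real k - real n) * (real i / real k)) * F u s powr (real i / real k)"
    unfolding 1 2 by (simp add: powr_add)
  thus ?thesis unfolding 3 .
qed

lemma P_deriv: assumes "nice u B" "continuous_on {0..1} u" "x \<in> {0<..<1}" "i \<le> k"
  shows "\<exists>D. ((\<lambda>s. s^(n-i) * (g u s)^i) has_real_derivative D) (at x) \<and> D \<ge> 0"
proof -
  define e where "e = real n - real n * real i / real k"
  have x: "0 < x" "x < 1" using assms by auto
  have e0: "e \<ge> 0"
  proof -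
    have "real i / real k \<le> 1" using assms k1 by simp
    from mult_left_le[OF this, of "real n"] have "real n * (real i / real k) \<le> real n" by simp
    thus ?thesis unfolding e_def by simp
  qed
  have Fp: "F u x > 0" using F_pos[OF assms(1)] x by simp
  have d: "((\<lambda>s. s powr e * F u s powr (real i / real k)) has_real_derivative
      e * x powr (e - 1) * F u x powr (real i / real k) + (real i / real k * F u x powr (real i / real k - of_nat 1) * h u x) * x powr e) (at x)"
    using DERIV_mult[OF has_real_derivative_powr[OF x(1), of e] DERIV_fun_powr[OF F_deriv[OF assms(1-3)] Fp, of "real i / real k"]]
    by (simp add: mult.commute)
  have nn: "0 \<le> e * x powr (e - 1) * F u x powr (real i / real k) + (real i / real k * F u x powr (real i / real k - of_nat 1) * h u x) * x powr e"
    using e0 x h_nonneg[of x u] by (intro add_nonneg_nonneg mult_nonneg_nonneg) auto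
  have "((\<lambda>s. s^(n-i) * (g u s)^i) has_real_derivative
      e * x powr (e - 1) * F u x powr (real i / real k) + (real i / real k * F u x powr (real i / real k - of_nat 1) * h u x) * x powr e) (at x)"
    by (rule has_field_derivative_transform_within_open[OF d, where S="{0<..<1}"])
       (use x P_eq[OF assms(1) _ _ assms(4)] in \<open>auto simp: e_def\<close>)
  thus ?thesis using nn by blast
qed

lemma hess_deriv: assumes "nice u B" "continuous_on {0..1} u" "x \<in> {0<..<1}"
  shows "((\<lambda>s. s^(n-k) * (g u s)^k) has_real_derivative h u x) (at x)"
proof -
  have x: "0 < x" "x < 1" using assms by auto
  show ?thesis
  proof (rule has_field_derivative_transform_within_open[OF F_deriv[OF assms], where S="{0<..<1}"])
    fix s :: real assume s: "s \<in> {0<..<1}"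
    have "s^(n-k) * (g u s)^k = s powr (real n - real n * real k / real k) * F u s powr (real k / real k)"
      using P_eq[OF assms(1), of s k] s by auto
    also have "\<dots> = F u s" using k1 F_pos[OF assms(1), of s] s by simp
    finally show "F u s = s^(n-k) * (g u s)^k" by simp
  qed (use x in auto)
qed

lemma regular: assumes "nice u B" "continuous_on {0..1} u"
  shows "k_admissible n k (T u) (g u)" "g u 0 = 0" "T u 1 = 0"
    "\<And>r. r \<in> {0<..<1} \<Longrightarrow> hess_op n k (g u) r = lam * (1 - u r) powr q"
    "\<And>r. r \<in> {0<..<1} \<Longrightarrow> T u r < 0"
proof -
  show "g u 0 = 0" by (rule g_zero)
  show "T u 1 = 0" by (rule T_one)
  show "T u r < 0" if "r \<in> {0<..<1}" for r using T_neg[OF assms(1)] that by auto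
  show "hess_op n k (g u) r = lam * (1 - u r) powr q" if r: "r \<in> {0<..<1}" for r
  proof -
    have "deriv (\<lambda>s. s^(n-k) * (g u s)^k) r = h u r" by (rule DERIV_imp_deriv[OF hess_deriv[OF assms r]])
    moreover have "r powr (1 - real n) * r^(n-1) = 1"
    proof -
      have "n \<ge> 1" using nk by simp
      have "r^(n-1) = r powr (real (n-1))" using r by (simp add: powr_realpow)
      hence "r^(n-1) = r powr (real n - 1)" using \<open>n \<ge> 1\<close> by (simp add: of_nat_diff)
      thus ?thesis using r by (simp add: powr_add[symmetric])
    qed
    ultimately show ?thesis using c_pos
      by (simp add: hess_op_def hh_def)
  qed
  show "k_admissible n k (T u) (g u)"
    unfolding k_admissible_def C2C1_def
  proof (intro conjI ballI)
    show "(T u has_real_derivative g u x) (at x within {0..1})" if "x \<in> {0..1}" for x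
      using T_deriv[OF assms(1) that] .
    show "continuous_on {0..1} (g u)" by (rule g_cont[OF assms(1)])
    show "g u differentiable at x" if "x \<in> {0<..<1}" for x
      using g_deriv[OF assms that] real_differentiable_def by blast
    show "continuous_on {0<..<1} (deriv (g u))"
      using Dg_cont[OF assms] by (rule continuous_on_eq) (metis DERIV_imp_deriv g_deriv[OF assms])
    show "0 \<le> deriv (\<lambda>s. s ^ (n - i) * g u s ^ i) r" if i: "i \<in> {1..k}" and r: "r \<in> {0<..<1}" for i r
    proof -
      obtain D where "((\<lambda>s. s^(n-i) * (g u s)^i) has_real_derivative D) (at r)" "D \<ge> 0"
        using P_deriv[OF assms r] i by auto
      thus ?thesis by (simp add: DERIV_imp_deriv)
    qed
  qed
qed

lemma rp1: assumes "r > 0" shows "r powr (1 - real n) * r^(n-1) = 1"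
proof -
  have "n \<ge> 1" using nk by simp
  have "r^(n-1) = r powr (real (n-1))" using assms by (simp add: powr_realpow)
  hence "r^(n-1) = r powr (real n - 1)" using \<open>n \<ge> 1\<close> by (simp add: of_nat_diff)
  thus ?thesis using assms by (simp add: powr_add[symmetric])
qed

lemma sub_props:
  assumes "subsolution n k q lam u"
  shows "continuous_on {0..1} u" "\<And>x y. 0 \<le> x \<Longrightarrow> x \<le> y \<Longrightarrow> y \<le> 1 \<Longrightarrow> u x \<le> u y"
    "nice u (- u 0)" "\<And>r. r \<in> {0..1} \<Longrightarrow> u r \<le> T u r"
proof -
  obtain u' where adm: "k_admissible n k u u'" and u1: "u 1 \<le> 0"
    and hs: "\<And>r. r \<in> {0<..<1} \<Longrightarrow> hess_op n k u' r \<ge> lam * (1 - u r) powr q"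
    using assms unfolding subsolution_def by blast
  have der: "\<And>x. x \<in> {0..1} \<Longrightarrow> (u has_real_derivative u' x) (at x within {0..1})"
    and cu': "continuous_on {0..1} u'" and du': "\<And>x. x \<in> {0<..<1} \<Longrightarrow> u' differentiable (at x)"
    and ad: "\<And>i r. i \<in> {1..k} \<Longrightarrow> r \<in> {0<..<1} \<Longrightarrow> deriv (\<lambda>s. s ^ (n - i) * (u' s) ^ i) r \<ge> 0"
    using adm unfolding k_admissible_def C2C1_def by auto
  show cu: "continuous_on {0..1} u"
    using der by (meson DERIV_continuous continuous_on_eq_continuous_within)
  have up: "u' x \<ge> 0" if x: "0 < x" "x \<le> 1" for x
  proof -
    define phi where "phi s = s^(n-1) * (u' s)^1" for s
    have "phi 0 \<le> phi x"
    proof (rule DERIV_nonneg_imp_increasing_open[of 0 x])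
      show "0 \<le> x" using x by simp
      fix y assume y: "0 < y" "y < x"
      have "y \<in> {0<..<1}" using x y by auto
      hence "phi differentiable (at y)" unfolding phi_def[abs_def]
        using du' by (intro derivative_intros) auto
      hence "DERIV phi y :> deriv phi y" by (simp add: DERIV_deriv_iff_real_differentiable)
      moreover have "deriv phi y \<ge> 0" unfolding phi_def[abs_def]
        using ad[of 1 y] k1 \<open>y \<in> {0<..<1}\<close> by auto
      ultimately show "\<exists>D. DERIV phi y :> D \<and> D \<ge> 0" by blast
    next
      show "continuous_on {0..x} phi" unfolding phi_def[abs_def]
        using x by (intro continuous_intros continuous_on_subset[OF cu']) auto
    qed
    moreover have "phi 0 = 0" using nk k1 by (simp add: phi_def)
    ultimately have "phi x \<ge> 0" by simp
    hence "x^(n-1) * u' x \<ge> 0" by (simp add: phi_def)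
    moreover have "x^(n-1) > 0" using x by simp
    ultimately show ?thesis by (simp add: zero_le_mult_iff)
  qed
  have up0: "u' 0 \<ge> 0"
  proof -
    have "(u' \<longlongrightarrow> u' 0) (at 0 within {0..1})"
      using cu' by (simp add: continuous_on_eq_continuous_within continuous_within)
    hence lim: "(u' \<longlongrightarrow> u' 0) (at_right 0)" by (simp add: at_within_Icc_at_right)
    have "\<forall>\<^sub>F x in at_right 0. 0 \<le> u' x"
      unfolding eventually_at_right_field
      by (rule exI[of _ 1]) (use up in auto)
    thus ?thesis using tendsto_lowerbound[OF lim] by simp
  qed
  have upall: "u' x \<ge> 0" if "x \<in> {0..1}" for x
    using up up0 that by (cases "x = 0") auto
  show mono: "u x \<le> u y" if xy: "0 \<le> x" "x \<le> y" "y \<le> 1" for x y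
  proof (rule DERIV_nonneg_imp_increasing_open[OF xy(2)])
    fix z assume z: "x < z" "z < y"
    hence zi: "z \<in> interior {0..1}" using xy by auto
    have "DERIV u z :> u' z" using der[of z] zi at_within_interior[OF zi] by auto
    thus "\<exists>D. DERIV u z :> D \<and> D \<ge> 0" using upall[of z] z xy by auto
  next
    show "continuous_on {x..y} u" using xy by (intro continuous_on_subset[OF cu]) auto
  qed
  have unp: "u s \<le> 0" if "s \<in> {0..1}" for s using mono[of s 1] that u1 by auto
  show nice: "nice u (- u 0)" unfolding nice_def
  proof (intro conjI ballI)
    fix s :: real assume s: "s \<in> {0..1}"
    show "- (- u 0) \<le> u s" using mono[of 0 s] s by simp
    show "u s \<le> 0" using unp s .
  next
    have "nice_pre": "\<forall>s\<in>{0..1}. 1 - u s \<noteq> 0" using unp by force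
    have "continuous_on {0..1} (\<lambda>s. s^(n-1) * lam * (1 - u s) powr q / c)"
      by (intro continuous_intros cu nice_pre) (use c_pos in auto)
    hence "continuous_on {0..1} (h u)" by (simp add: hh_def[abs_def])
    thus "h u integrable_on {0..1}" by (rule integrable_continuous_interval)
  qed
  have Gge: "r^(n-k) * (u' r)^k \<ge> F u r" if r: "0 < r" "r \<le> 1" for r
  proof -
    define G where "G s = s^(n-k) * (u' s)^k - F u s" for s
    have "G 0 \<le> G r"
    proof (rule DERIV_nonneg_imp_increasing_open[of 0 r])
      show "0 \<le> r" using r by simp
      fix y assume y: "0 < y" "y < r"
      hence yi: "y \<in> {0<..<1}" using r by auto
      have "(\<lambda>s. s^(n-k) * (u' s)^k) differentiable (at y)"
        using du'[OF yi] by (intro derivative_intros) auto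
      hence d1: "DERIV (\<lambda>s. s^(n-k) * (u' s)^k) y :> deriv (\<lambda>s. s^(n-k) * (u' s)^k) y"
        by (simp add: DERIV_deriv_iff_real_differentiable)
      have d2: "DERIV (F u) y :> h u y" by (rule F_deriv[OF nice cu yi])
      have "DERIV G y :> deriv (\<lambda>s. s^(n-k) * (u' s)^k) y - h u y"
        unfolding G_def[abs_def] by (intro derivative_intros d1 d2)
      moreover have "deriv (\<lambda>s. s^(n-k) * (u' s)^k) y \<ge> h u y"
      proof -
        have "c * y powr (1 - real n) * deriv (\<lambda>s. s^(n-k) * (u' s)^k) y \<ge> lam * (1 - u y) powr q"
          using hs[OF yi] by (simp add: hess_op_def)
        hence "y^(n-1) * (c * y powr (1 - real n) * deriv (\<lambda>s. s^(n-k) * (u' s)^k) y) / c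
            \<ge> y^(n-1) * (lam * (1 - u y) powr q) / c"
          using c_pos y by (intro divide_right_mono mult_left_mono) auto
        moreover have "y^(n-1) * (c * y powr (1 - real n) * deriv (\<lambda>s. s^(n-k) * (u' s)^k) y) / c
            = (y powr (1 - real n) * y^(n-1)) * deriv (\<lambda>s. s^(n-k) * (u' s)^k) y"
          using c_pos by (simp add: field_simps)
        ultimately have "y^(n-1) * (lam * (1 - u y) powr q) / c \<le> (y powr (1 - real n) * y^(n-1)) * deriv (\<lambda>s. s^(n-k) * (u' s)^k) y"
          by linarith
        thus ?thesis unfolding rp1[OF y(1)] hh_def by (simp add: mult.assoc)
      qed
      ultimately show "\<exists>D. DERIV G y :> D \<and> D \<ge> 0" by (intro exI[of _ "deriv (\<lambda>s. s^(n-k) * (u' s)^k) y - h u y"]) auto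
    next
      show "continuous_on {0..r} G" unfolding G_def[abs_def]
        using r by (intro continuous_intros continuous_on_subset[OF cu'] continuous_on_subset[OF F_cont[OF nice]]) auto
    qed
    moreover have "G 0 = 0"
    proof -
      have "n - k \<noteq> 0" using nk by simp
      thus ?thesis by (simp add: G_def FF_def)
    qed
    ultimately show ?thesis by (simp add: G_def)
  qed
  have gle: "g u r \<le> u' r" if r: "r \<in> {0..1}" for r
  proof (cases "r = 0")
    case True thus ?thesis using up0 by (simp add: g_zero)
  next
    case False
    hence r: "0 < r" "r \<le> 1" using r by auto
    have e: "r powr (real k - real n) * r^(n-k) = 1"
    proof -
      have "k < n" using nk by simp
      have "r^(n-k) = r powr (real (n-k))" using r by (simp add: powr_realpow)
      hence "r^(n-k) = r powr (real n - real k)" using \<open>k < n\<close> by (simp add: of_nat_diff)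
      thus ?thesis using r by (simp add: powr_add[symmetric])
    qed
    have "r powr (real k - real n) * F u r \<le> r powr (real k - real n) * (r^(n-k) * (u' r)^k)"
      using Gge[OF r] by (intro mult_left_mono) auto
    also have "\<dots> = (u' r)^k" using e by (simp add: mult.assoc[symmetric])
    finally have A: "r powr (real k - real n) * F u r \<le> (u' r)^k" .
    have "g u r = (r powr (real k - real n) * F u r) powr (1/real k)" using r by (simp add: gg_def)
    also have "\<dots> \<le> ((u' r)^k) powr (1/real k)"
      using A F_nonneg[OF nice, of r] r k1 by (intro powr_mono2) auto
    also have "\<dots> = u' r"
    proof (cases "u' r = 0")
      case True thus ?thesis using k1 by simp
    next
      case False
      have kk: "real k * (1/real k) = 1" using k1 by simp
      have pos: "u' r > 0" using False up[OF r] by linarith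
      have e1: "u' r powr (real k) = (u' r)^k" by (rule powr_realpow[OF pos])
      have "((u' r)^k) powr (1/real k) = ((u' r) powr (real k)) powr (1/real k)" by (simp only: e1)
      also have "\<dots> = u' r powr (real k * (1/real k))" by (rule powr_powr)
      also have "\<dots> = u' r powr 1" by (simp only: kk)
      also have "\<dots> = u' r" by (rule powr_one[OF less_imp_le[OF pos]])
      finally show ?thesis .
    qed
    finally show ?thesis .
  qed
  show "u r \<le> T u r" if r: "r \<in> {0..1}" for r
  proof -
    have "(u' has_integral (u 1 - u r)) {r..1}"
    proof (rule fundamental_theorem_of_calculus)
      show "r \<le> 1" using r by simp
      fix x assume x: "x \<in> {r..1}"
      hence "(u has_real_derivative u' x) (at x within {r..1})"
        using x r by (intro DERIV_subset[OF der[of x]]) auto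
      thus "(u has_vector_derivative u' x) (at x within {r..1})"
        by (simp add: has_real_derivative_iff_has_vector_derivative)
    qed
    hence I1: "integral {r..1} u' = u 1 - u r" by (rule integral_unique)
    have I2: "u' integrable_on {r..1}" using \<open>(u' has_integral _) _\<close> by blast
    have I3: "g u integrable_on {r..1}" using r by (intro g_int[OF nice]) auto
    have "integral {r..1} (g u) \<le> integral {r..1} u'"
      by (rule integral_le[OF I3 I2]) (use r gle in auto)
    note I1 this
    thus ?thesis using I1 T_alt[OF nice, of r] r u1 by simp
  qed
qed

lemma h_int_mono: assumes "mono_on {0..1} v" "\<And>s. s \<in> {0..1} \<Longrightarrow> v s \<le> 0"
  shows "h v integrable_on {0..1}"
proof -
  define p where "p s = (1 - v s) powr q" for s
  have "mono_on {0..1} (\<lambda>s. - p s)"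
  proof (rule mono_onI)
    fix x y :: real assume "x \<in> {0..1}" "y \<in> {0..1}" "x \<le> y"
    hence "v x \<le> v y" "v y \<le> 0" using assms by (auto simp: mono_on_def)
    hence "(1 - v y) powr q \<le> (1 - v x) powr q" using q_pos by (intro powr_mono2) auto
    thus "- p x \<le> - p y" by (simp add: p_def)
  qed
  hence "(\<lambda>s. - p s) integrable_on {0..1}" by (rule integrable_on_mono_on)
  hence "(\<lambda>s. - (- p s)) integrable_on {0..1}" by (rule integrable_neg)
  hence "p integrable_on {0..1}" by simp
  hence abs: "p absolutely_integrable_on {0..1}"
    by (rule nonnegative_absolutely_integrable_1) (simp add: p_def)
  have meas: "(\<lambda>s. s^(n-1)*lam/c) \<in> borel_measurable (lebesgue_on {0..1})"
    by (intro continuous_imp_measurable_on_sets_lebesgue continuous_intros) (use c_pos in auto)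
  have bnd: "bounded ((\<lambda>s. s^(n-1)*lam/c) ` {0..1})"
    by (intro compact_imp_bounded compact_continuous_image continuous_intros) (use c_pos in auto)
  have "(\<lambda>s. (s^(n-1)*lam/c) * p s) absolutely_integrable_on {0..1}"
    by (rule absolutely_integrable_bounded_measurable_product_real[OF meas _ bnd abs]) auto
  hence "(\<lambda>s. (s^(n-1)*lam/c) * p s) integrable_on {0..1}"
    by (simp add: absolutely_integrable_on_def)
  moreover have "h v = (\<lambda>s. (s^(n-1)*lam/c) * p s)"
    by (rule ext) (use c_pos in \<open>simp add: hh_def p_def\<close>)
  ultimately show ?thesis by simp
qed

lemma exists_max:
  assumes w: "subsolution n k q lam w"
  shows "\<exists>v. maximal_solution n k q lam v \<and> bounded (v ` {0..1})"
proof -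
  define v where "v r = Sup ((\<lambda>u. u r) ` {u. subsolution n k q lam u})" for r
  have bdd: "bdd_above ((\<lambda>u. u r) ` {u. subsolution n k q lam u})" if r: "r \<in> {0..1}" for r
  proof (rule bdd_aboveI[of _ 0])
    fix x assume "x \<in> (\<lambda>u. u r) ` {u. subsolution n k q lam u}"
    then obtain u where u: "subsolution n k q lam u" "x = u r" by auto
    show "x \<le> 0" using sub_props(3)[OF u(1)] r u(2) by (auto simp: nice_def)
  qed
  have ne: "(\<lambda>u. u r) ` {u. subsolution n k q lam u} \<noteq> {}" for r using w by auto
  have upper: "u r \<le> v r" if "subsolution n k q lam u" "r \<in> {0..1}" for u r
    unfolding v_def using that bdd by (intro cSup_upper) auto
  have least: "v r \<le> b" if "\<And>u. subsolution n k q lam u \<Longrightarrow> u r \<le> b" for r b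
    unfolding v_def using ne that by (intro cSup_least) auto
  have vle0: "v r \<le> 0" if "r \<in> {0..1}" for r
    using that by (intro least) (auto dest!: sub_props(3) simp: nice_def)
  have vmono: "mono_on {0..1} v"
  proof (rule mono_onI)
    fix x y :: real assume xy: "x \<in> {0..1}" "y \<in> {0..1}" "x \<le> y"
    show "v x \<le> v y"
    proof (rule least)
      fix u assume u: "subsolution n k q lam u"
      have "u x \<le> u y" using sub_props(2)[OF u] xy by auto
      also have "\<dots> \<le> v y" using upper[OF u xy(2)] .
      finally show "u x \<le> v y" .
    qed
  qed
  define B where "B = - w 0"
  have vgeB: "- B \<le> v s" if "s \<in> {0..1}" for s
  proof -
    have "w 0 \<le> w s" using sub_props(2)[OF w, of 0 s] that by auto
    also have "\<dots> \<le> v s" using upper[OF w that] .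
    finally show ?thesis by (simp add: B_def)
  qed
  have nv: "nice v B" unfolding nice_def
    using vgeB vle0 h_int_mono[OF vmono vle0] by auto
  define v1 where "v1 = T v"
  define v2 where "v2 = T v1"
  have v_le_v1: "v r \<le> v1 r" if r: "r \<in> {0..1}" for r
  proof (rule least)
    fix u assume u: "subsolution n k q lam u"
    have "u r \<le> T u r" using sub_props(4)[OF u r] .
    also have "\<dots> \<le> T v r"
      using r by (intro T_mono[OF sub_props(3)[OF u] nv] upper[OF u]) auto
    finally show "u r \<le> v1 r" by (simp add: v1_def)
  qed
  have cv1: "continuous_on {0..1} v1" unfolding v1_def by (rule T_cont[OF nv])
  have nv1: "nice v1 B" unfolding nice_def
  proof (intro conjI ballI)
    fix s :: real assume s: "s \<in> {0..1}"
    show "- B \<le> v1 s" using vgeB[OF s] v_le_v1[OF s] by simp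
    show "v1 s \<le> 0" unfolding v1_def using T_nonpos[OF nv] s by auto
  next
    have "continuous_on {0..1} (h v1)"
    proof -
      have "\<forall>s\<in>{0..1}. 1 - v1 s \<noteq> 0" unfolding v1_def using T_nonpos[OF nv] by force
      hence "continuous_on {0..1} (\<lambda>s. s^(n-1) * lam * (1 - v1 s) powr q / c)"
        by (intro continuous_intros cv1) (use c_pos in auto)
      thus ?thesis by (simp add: hh_def[abs_def])
    qed
    thus "h v1 integrable_on {0..1}" by (rule integrable_continuous_interval)
  qed
  note reg = regular[OF nv1 cv1]
  have v1_le_v2: "v1 r \<le> v2 r" if r: "r \<in> {0..1}" for r
  proof -
    have "T v r \<le> T v1 r" using r by (intro T_mono[OF nv nv1] v_le_v1) auto
    thus ?thesis by (simp add: v1_def v2_def)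
  qed
  have v2le0: "v2 r \<le> 0" if "r \<in> {0..1}" for r unfolding v2_def using T_nonpos[OF nv1] that by auto
  have sub2: "subsolution n k q lam v2"
    unfolding subsolution_def
  proof (intro exI[of _ "g v1"] conjI ballI)
    show "k_admissible n k v2 (g v1)" using reg(1) by (simp add: v2_def)
    show "v2 1 \<le> 0" using reg(3) by (simp add: v2_def)
    fix r :: real assume r: "r \<in> {0<..<1}"
    have "(1 - v2 r) powr q \<le> (1 - v1 r) powr q"
      using v1_le_v2[of r] v2le0[of r] r q_pos by (intro powr_mono2) auto
    hence "lam * (1 - v2 r) powr q \<le> lam * (1 - v1 r) powr q" using lam by simp
    thus "lam * (1 - v2 r) powr q \<le> hess_op n k (g v1) r" using reg(4)[OF r] by simp
  qed
  have eq: "v2 r = v1 r" if r: "r \<in> {0..1}" for r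
    using upper[OF sub2 r] v_le_v1[OF r] v1_le_v2[OF r] by simp
  have cls: "classical_solution n k q lam v2"
    unfolding classical_solution_def
  proof (intro exI[of _ "g v1"] conjI ballI)
    show "k_admissible n k v2 (g v1)" using reg(1) by (simp add: v2_def)
    show "g v1 0 = 0" by (rule reg(2))
    show "v2 1 = 0" using reg(3) by (simp add: v2_def)
    fix r :: real assume r: "r \<in> {0<..<1}"
    show "v2 r < 0" using reg(5)[OF r] by (simp add: v2_def)
    show "hess_op n k (g v1) r = lam * (1 - v2 r) powr q" using reg(4)[OF r] eq[of r] r by simp
  qed
  have "maximal_solution n k q lam v2"
    unfolding maximal_solution_def
  proof (intro conjI allI impI ballI cls)
    fix u and r :: real assume u: "subsolution n k q lam u" and r: "r \<in> {0..1}"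
    show "u r \<le> v2 r" using upper[OF u r] v_le_v1[OF r] eq[OF r] by simp
  qed
  moreover have "bounded (v2 ` {0..1})"
    unfolding v2_def by (intro compact_imp_bounded compact_continuous_image T_cont[OF nv1]) auto
  ultimately show ?thesis by blast
qed

end

lemma classical_imp_sub:
  assumes "classical_solution n k q lam2 u" "lam1 \<le> lam2"
  shows "subsolution n k q lam1 u"
proof -
  obtain u' where "k_admissible n k u u'" "u 1 = 0"
    and h: "\<And>r. r \<in> {0<..<1} \<Longrightarrow> u r < 0 \<and> hess_op n k u' r = lam2 * (1 - u r) powr q"
    using assms(1) unfolding classical_solution_def by blast
  moreover have "\<forall>r\<in>{0<..<1}. hess_op n k u' r \<ge> lam1 * (1 - u r) powr q"
    using h assms(2) by (auto intro: mult_right_mono)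
  ultimately show ?thesis unfolding subsolution_def by auto
qed


theorem lemma2:
  fixes n k :: nat and q lam0 :: real
  assumes "k \<ge> 1" and "n > 2 * k" and "q > real k" and "lam0 > 0"
    and "\<exists>w. classical_solution n k q lam0 w"
  shows "\<exists>U :: real \<Rightarrow> real \<Rightarrow> real.
           (\<forall>lam\<in>{0<..<lam0}. maximal_solution n k q lam (U lam) \<and> bounded (U lam ` {0..1})) \<and>
           (\<forall>lam1 lam2. 0 < lam1 \<and> lam1 < lam2 \<and> lam2 < lam0 \<longrightarrow>
              (\<forall>r\<in>{0..1}. U lam2 r \<le> U lam1 r))"
proof -
  obtain w0 where cw: "classical_solution n k q lam0 w0" using assms(5) by blast
  have ex: "\<exists>v. maximal_solution n k q lam v \<and> bounded (v ` {0..1})" if lm: "lam \<in> {0<..<lam0}" for lam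
  proof -
    have "lam \<le> lam0" using lm by simp
    interpret S n k q lam using assms lm by unfold_locales auto
    show ?thesis by (rule exists_max[OF classical_imp_sub[OF cw \<open>lam \<le> lam0\<close>]])
  qed
  define U where "U lam = (SOME v. maximal_solution n k q lam v \<and> bounded (v ` {0..1}))" for lam
  have UP: "maximal_solution n k q lam (U lam) \<and> bounded (U lam ` {0..1})" if "lam \<in> {0<..<lam0}" for lam
    unfolding U_def by (rule someI_ex[OF ex[OF that]])
  have P1: "\<forall>lam\<in>{0<..<lam0}. maximal_solution n k q lam (U lam) \<and> bounded (U lam ` {0..1})"
    using UP by blast
  have P2: "\<forall>lam1 lam2. 0 < lam1 \<and> lam1 < lam2 \<and> lam2 < lam0 \<longrightarrow> (\<forall>r\<in>{0..1}. U lam2 r \<le> U lam1 r)"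
  proof (intro allI impI ballI)
    fix lam1 lam2 r assume l: "0 < lam1 \<and> lam1 < lam2 \<and> lam2 < lam0" and r: "r \<in> {0..1::real}"
    have "classical_solution n k q lam2 (U lam2)" using UP[of lam2] l by (auto simp: maximal_solution_def)
    hence "subsolution n k q lam1 (U lam2)" using l by (intro classical_imp_sub) auto
    moreover have "maximal_solution n k q lam1 (U lam1)" using UP[of lam1] l by auto
    ultimately show "U lam2 r \<le> U lam1 r" using r by (auto simp: maximal_solution_def)
  qed
  show ?thesis using P1 P2 by blast
qed

end
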